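(* Let $D$ be a finite digraph and let $k$ be a positive integer. Then $\pi_k(D) \leq \alpha'_k(D)$ and $\chi'_k(D) \leq \lambda_k(D)$.
   Context: Paths are directed paths. A path partition of $D$ is a collection of vertex-disjoint paths of $D$ covering $V(D)$. The $k$-norm of a path partition $\mathcal{P}$ is $|\mathcal{P}|_k=\sum_{P\in\mathcal{P}}\min\{|V(P)|,k\}$, and $\pi_k(D)$ is the minimum $k$-norm over all path partitions of $D$. A partial $k$-dicoloring of $D$ is a collection $\{S_1,\dots,S_k\}$ of $k$ pairwise disjoint vertex sets of $D$ each of which induces an acyclic subdigraph; $\alpha'_k(D)$ is the maximum number of vertices covered by a partial $k$-dicoloring of $D$. A dicoloring of $D$ is a partition of $V(D)$ into sets each inducing an acyclic subdigraph; the $k$-norm of a dicoloring $\mathcal{S}$ is $|\mathcal{S}|_k=\sum_{S\in\mathcal{S}}\min\{|S|,k\}$, and $\chi'_k(D)$ is the minimum $k$-norm over all dicolorings of $D$. A $k$-pack is a collection of $k$ vertex-disjoint paths of $D$; $\lambda_k(D)$ is the maximum number of vertices covered by a $k$-pack of $D$. *)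

theory Defs
  imports Main
begin

definition digraph :: "'a set \<Rightarrow> 'a rel \<Rightarrow> bool" where
  "digraph V A \<longleftrightarrow> finite V \<and> A \<subseteq> V \<times> V \<and> (\<forall>v. (v, v) \<notin> A)"

definition is_path :: "'a set \<Rightarrow> 'a rel \<Rightarrow> 'a list \<Rightarrow> bool" where
  "is_path V A P \<longleftrightarrow> P \<noteq> [] \<and> distinct P \<and> set P \<subseteq> V \<and>
     (\<forall>i. Suc i < length P \<longrightarrow> (P ! i, P ! Suc i) \<in> A)"

definition path_partition :: "'a set \<Rightarrow> 'a rel \<Rightarrow> 'a list set \<Rightarrow> bool" where
  "path_partition V A \<P> \<longleftrightarrow> (\<forall>P\<in>\<P>. is_path V A P) \<and>
     (\<forall>P\<in>\<P>. \<forall>Q\<in>\<P>. P \<noteq> Q \<longrightarrow> set P \<inter> set Q = {}) \<and>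
     (\<Union>P\<in>\<P>. set P) = V"

definition path_knorm :: "nat \<Rightarrow> 'a list set \<Rightarrow> nat" where
  "path_knorm k \<P> = (\<Sum>P\<in>\<P>. min (length P) k)"

definition pi_k :: "nat \<Rightarrow> 'a set \<Rightarrow> 'a rel \<Rightarrow> nat" where
  "pi_k k V A = Min {path_knorm k \<P> | \<P>. path_partition V A \<P>}"

definition acyclic_set :: "'a set \<Rightarrow> 'a rel \<Rightarrow> 'a set \<Rightarrow> bool" where
  "acyclic_set V A S \<longleftrightarrow> S \<subseteq> V \<and> acyclic (A \<inter> (S \<times> S))"

definition partial_dicoloring :: "nat \<Rightarrow> 'a set \<Rightarrow> 'a rel \<Rightarrow> (nat \<Rightarrow> 'a set) \<Rightarrow> bool" where
  "partial_dicoloring k V A S \<longleftrightarrow> (\<forall>i<k. acyclic_set V A (S i)) \<and>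
     (\<forall>i<k. \<forall>j<k. i \<noteq> j \<longrightarrow> S i \<inter> S j = {})"

definition alpha'_k :: "nat \<Rightarrow> 'a set \<Rightarrow> 'a rel \<Rightarrow> nat" where
  "alpha'_k k V A = Max {card (\<Union>i<k. S i) | S. partial_dicoloring k V A S}"

definition dicoloring :: "'a set \<Rightarrow> 'a rel \<Rightarrow> 'a set set \<Rightarrow> bool" where
  "dicoloring V A \<S> \<longleftrightarrow> (\<forall>S\<in>\<S>. S \<noteq> {} \<and> acyclic_set V A S) \<and>
     (\<forall>S\<in>\<S>. \<forall>T\<in>\<S>. S \<noteq> T \<longrightarrow> S \<inter> T = {}) \<and> \<Union>\<S> = V"

definition col_knorm :: "nat \<Rightarrow> 'a set set \<Rightarrow> nat" where
  "col_knorm k \<S> = (\<Sum>S\<in>\<S>. min (card S) k)"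

definition chi'_k :: "nat \<Rightarrow> 'a set \<Rightarrow> 'a rel \<Rightarrow> nat" where
  "chi'_k k V A = Min {col_knorm k \<S> | \<S>. dicoloring V A \<S>}"

text \<open>k-pack: k vertex-disjoint paths P_0, ..., P_{k-1}; an empty list stands for an
  absent path (so a k-pack is at most k paths, which matters only when |V| < k).\<close>
definition k_pack :: "nat \<Rightarrow> 'a set \<Rightarrow> 'a rel \<Rightarrow> (nat \<Rightarrow> 'a list) \<Rightarrow> bool" where
  "k_pack k V A P \<longleftrightarrow> (\<forall>i<k. P i = [] \<or> is_path V A (P i)) \<and>
     (\<forall>i<k. \<forall>j<k. i \<noteq> j \<longrightarrow> set (P i) \<inter> set (P j) = {})"

definition lambda_k :: "nat \<Rightarrow> 'a set \<Rightarrow> 'a rel \<Rightarrow> nat" where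
  "lambda_k k V A = Max {card (\<Union>i<k. set (P i)) | P. k_pack k V A P}"

end

theory Submission
  imports Defs
begin

definition hgood :: "'a set \<Rightarrow> 'a rel \<Rightarrow> 'a set \<Rightarrow> 'a set \<Rightarrow> 'a list set \<Rightarrow> ('a \<Rightarrow> nat) \<Rightarrow> bool" where
"hgood V A W S P h \<longleftrightarrow> finite P \<and> (\<forall>Q\<in>P. is_path V A Q) \<and>
   (\<forall>Q\<in>P. \<forall>Q'\<in>P. Q \<noteq> Q' \<longrightarrow> set Q \<inter> set Q' = {}) \<and> (\<Union>Q\<in>P. set Q) = W \<and>
   (\<forall>Q\<in>P. \<forall>j<length Q. h (Q!j) = length Q - Suc j) \<and>
   (\<forall>i. acyclic (A \<inter> ({v\<in>W. h v = i} \<times> {v\<in>W. h v = i}))) \<and>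
   (W \<noteq> {} \<longrightarrow> (\<exists>Q\<in>P. hd Q \<in> S \<and> (\<forall>v\<in>W. h v < length Q)))"

lemma acyclic_union_oneway:
  assumes aX: "acyclic (E \<inter> X \<times> X)" and aY: "acyclic (E \<inter> Y \<times> Y)"
    and no: "\<forall>x\<in>X. \<forall>y\<in>Y. (x,y) \<notin> E"
  shows "acyclic (E \<inter> (X \<union> Y) \<times> (X \<union> Y))"
proof -
  let ?R = "E \<inter> (X \<union> Y) \<times> (X \<union> Y)"
  have c1: "(a,b) \<in> (E \<inter> X \<times> X)\<^sup>+" if "(a,b) \<in> ?R\<^sup>+" "a \<in> X" for a b
    using that
  proof (induction rule: trancl_induct)
    case (base y) then show ?case using no by blast
  next
    case (step y z)
    then have "y \<in> Range ((E \<inter> X \<times> X)\<^sup>+)" by blast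
    then have "y \<in> X" unfolding trancl_range by blast
    then have "(y,z) \<in> E \<inter> X \<times> X" using step no by blast
    then show ?case using step by (meson trancl.trancl_into_trancl)
  qed
  have c2: "(a,b) \<in> (E \<inter> Y \<times> Y)\<^sup>+" if "(a,b) \<in> ?R\<^sup>+" "b \<in> Y" for a b
    using that
  proof (induction rule: converse_trancl_induct)
    case (base y) then show ?case using no by blast
  next
    case (step y z)
    then have "z \<in> Domain ((E \<inter> Y \<times> Y)\<^sup>+)" by blast
    then have "z \<in> Y" unfolding trancl_domain by blast
    then have "(y,z) \<in> E \<inter> Y \<times> Y" using step no by blast
    then show ?case using step by (meson trancl_into_trancl2)
  qed
  show ?thesis unfolding acyclic_def
  proof
    fix x show "(x,x) \<notin> ?R\<^sup>+"
    proof
      assume h: "(x,x) \<in> ?R\<^sup>+"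
      then have "x \<in> Domain (?R\<^sup>+)" by blast
      then have "x \<in> X \<union> Y" unfolding trancl_domain by blast
      then show False using c1[OF h] c2[OF h] aX aY unfolding acyclic_def by blast
    qed
  qed
qed

lemma stepA:
  assumes g: "hgood V A T' S1 P1 h1" and S1: "S1 = {v\<in>T'. (r,v) \<in> A}"
    and rV: "r \<in> V" and rT: "r \<notin> T'" and noloop: "(r,r) \<notin> A"
  shows "\<exists>P h. hgood V A (insert r T') {r} P h"
proof -
  note g' = g[unfolded hgood_def]
  have fin: "finite P1" using g' by (elim conjE)
  have paths: "\<forall>Q\<in>P1. is_path V A Q" using g' by (elim conjE)
  have disj: "\<forall>Q\<in>P1. \<forall>Q'\<in>P1. Q \<noteq> Q' \<longrightarrow> set Q \<inter> set Q' = {}" using g' by (elim conjE)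
  have un: "(\<Union>Q\<in>P1. set Q) = T'" using g' by (elim conjE)
  have hts: "\<forall>Q\<in>P1. \<forall>j<length Q. h1 (Q!j) = length Q - Suc j" using g' by (elim conjE)
  have acy: "\<forall>i. acyclic (A \<inter> ({v\<in>T'. h1 v = i} \<times> {v\<in>T'. h1 v = i}))" using g' by (elim conjE)
  have mx: "T' \<noteq> {} \<longrightarrow> (\<exists>Q\<in>P1. hd Q \<in> S1 \<and> (\<forall>v\<in>T'. h1 v < length Q))" using g' by (elim conjE)
  obtain Q1 where Q1: "Q1 = [] \<or> Q1 \<in> P1" "Q1 \<noteq> [] \<Longrightarrow> (r, hd Q1) \<in> A"
    "\<forall>v\<in>T'. h1 v < length Q1"
  proof (cases "T' = {}")
    case True then show ?thesis using that[of "[]"] by auto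
  next
    case False
    then obtain Q where "Q \<in> P1" "hd Q \<in> S1" "\<forall>v\<in>T'. h1 v < length Q" using mx by blast
    then show ?thesis using that[of Q] S1 by auto
  qed
  have sQ1: "set Q1 \<subseteq> T'" using Q1(1) un by auto
  have pQ1: "distinct Q1 \<and> set Q1 \<subseteq> V \<and> (\<forall>i. Suc i < length Q1 \<longrightarrow> (Q1 ! i, Q1 ! Suc i) \<in> A)"
  proof (cases "Q1 = []")
    case False
    then have "is_path V A Q1" using Q1(1) paths by blast
    then show ?thesis unfolding is_path_def by blast
  qed simp
  have P1e: "Q1 = [] \<Longrightarrow> P1 = {}"
  proof -
    assume "Q1 = []"
    then have "T' = {}" using Q1(3) by auto
    then show "P1 = {}" using un paths unfolding is_path_def by auto
  qed
  define P where "P = insert (r#Q1) (P1 - {Q1})"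
  define h where "h = h1(r := length Q1)"
  have rQ: "r \<notin> set Q" if "Q \<in> P1" for Q using that un rT by auto
  have "hgood V A (insert r T') {r} P h"
    unfolding hgood_def
  proof (intro conjI)
    show "finite P" using fin P_def by auto
    show "\<forall>Q\<in>P. is_path V A Q"
    proof
      fix Q assume "Q \<in> P"
      then consider "Q = r#Q1" | "Q \<in> P1" using P_def by auto
      then show "is_path V A Q"
      proof cases
        case 1
        have "\<forall>i. Suc i < length (r#Q1) \<longrightarrow> ((r#Q1) ! i, (r#Q1) ! Suc i) \<in> A"
        proof (intro allI impI)
          fix i assume i: "Suc i < length (r#Q1)"
          show "((r#Q1) ! i, (r#Q1) ! Suc i) \<in> A"
          proof (cases i)
            case 0
            then have ne: "Q1 \<noteq> []" using i by auto
            then have "(r, hd Q1) \<in> A" using Q1(2) by blast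
            then show ?thesis using 0 ne by (simp add: hd_conv_nth)
          next
            case (Suc i')
            then have ne: "Q1 \<noteq> []" using i by auto
            have "\<forall>i. Suc i < length Q1 \<longrightarrow> (Q1 ! i, Q1 ! Suc i) \<in> A"
              using pQ1 by blast
            moreover have "Suc i' < length Q1" using i Suc by simp
            ultimately show ?thesis using Suc by simp
          qed
        qed
        moreover have "distinct (r#Q1)" using pQ1 rT sQ1 by auto
        moreover have "set (r#Q1) \<subseteq> V" using pQ1 rV by simp
        ultimately show ?thesis unfolding 1 is_path_def by blast
      next
        case 2 then show ?thesis using paths by auto
      qed
    qed
    show "\<forall>Q\<in>P. \<forall>Q'\<in>P. Q \<noteq> Q' \<longrightarrow> set Q \<inter> set Q' = {}"
    proof (intro ballI impI)
      fix Q Q' assume a: "Q \<in> P" "Q' \<in> P" "Q \<noteq> Q'"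
      have d1: "set (r#Q1) \<inter> set Q = {}" if "Q \<in> P1 - {Q1}" for Q
      proof -
        have "set Q1 \<inter> set Q = {}"
        proof (cases "Q1 = []")
          case False
          then have "Q1 \<in> P1" using Q1(1) by blast
          moreover have "Q \<in> P1" "Q \<noteq> Q1" using that by auto
          ultimately show ?thesis using disj by blast
        qed simp
        moreover have "r \<notin> set Q" using rQ that by blast
        ultimately show ?thesis by simp
      qed
      have mem: "X = r#Q1 \<or> X \<in> P1 - {Q1}" if "X \<in> P" for X using that by (simp add: P_def)
      show "set Q \<inter> set Q' = {}"
      proof (cases "Q = r#Q1")
        case True
        then have "Q' \<in> P1 - {Q1}" using mem[OF a(2)] a(3) by metis
        then show ?thesis using d1 True by blast
      next
        case False
        then have q: "Q \<in> P1 - {Q1}" using mem[OF a(1)] by blast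
        show ?thesis
        proof (cases "Q' = r#Q1")
          case True
          then show ?thesis using d1[OF q] by blast
        next
          case False
          then have "Q' \<in> P1 - {Q1}" using mem[OF a(2)] by blast
          then show ?thesis using q disj a(3) by blast
        qed
      qed
    qed
    show "(\<Union>Q\<in>P. set Q) = insert r T'"
    proof (cases "Q1 = []")
      case True
      then show ?thesis using P1e un unfolding P_def by simp
    next
      case False
      then have "Q1 \<in> P1" using Q1(1) by blast
      then have "P1 = insert Q1 (P1 - {Q1})" by blast
      then have "T' = set Q1 \<union> (\<Union>Q\<in>P1 - {Q1}. set Q)" using un by (metis UN_insert)
      then show ?thesis unfolding P_def by simp
    qed
    show "\<forall>Q\<in>P. \<forall>j<length Q. h (Q!j) = length Q - Suc j"
    proof (intro ballI allI impI)
      fix Q j assume "Q \<in> P" "j < length Q"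
      then consider "Q = r#Q1" | "Q \<in> P1" using P_def by auto
      then show "h (Q!j) = length Q - Suc j"
      proof cases
        case 1
        show ?thesis
        proof (cases j)
          case 0 then show ?thesis using 1 by (simp add: h_def)
        next
          case (Suc j')
          have j': "j' < length Q1" using Suc 1 \<open>j < length Q\<close> by simp
          then have "Q1 ! j' \<in> set Q1" by simp
          then have nr: "Q1 ! j' \<noteq> r" using sQ1 rT by blast
          have "Q1 \<noteq> []" using j' by auto
          then have "Q1 \<in> P1" using Q1(1) by blast
          then have "h1 (Q1 ! j') = length Q1 - Suc j'" using hts j' by blast
          then show ?thesis using Suc 1 nr by (simp add: h_def)
        qed
      next
        case 2
        have "Q!j \<in> set Q" using \<open>j < length Q\<close> by simp
        then have "Q!j \<noteq> r" using rQ[OF 2] by blast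
        moreover have "h1 (Q!j) = length Q - Suc j" using hts 2 \<open>j < length Q\<close> by blast
        ultimately show ?thesis by (simp add: h_def)
      qed
    qed
    show "\<forall>i. acyclic (A \<inter> ({v\<in>insert r T'. h v = i} \<times> {v\<in>insert r T'. h v = i}))"
    proof
      fix i
      show "acyclic (A \<inter> ({v\<in>insert r T'. h v = i} \<times> {v\<in>insert r T'. h v = i}))"
      proof (cases "i = length Q1")
        case True
        have "{v\<in>insert r T'. h v = i} = {r}"
        proof (rule set_eqI)
          fix v
          show "v \<in> {v\<in>insert r T'. h v = i} \<longleftrightarrow> v \<in> {r}"
          proof (cases "v = r")
            case True then show ?thesis using \<open>i = length Q1\<close> by (simp add: h_def)
          next
            case False
            have "v \<in> T' \<Longrightarrow> h v < i" using Q1(3) False \<open>i = length Q1\<close> by (simp add: h_def)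
            then show ?thesis using False by auto
          qed
        qed
        moreover have "A \<inter> ({r} \<times> {r}) = {}" using noloop by blast
        ultimately show ?thesis by (simp add: acyclic_def)
      next
        case False
        have "{v\<in>insert r T'. h v = i} = {v\<in>T'. h1 v = i}"
        proof (rule set_eqI)
          fix v
          show "v \<in> {v\<in>insert r T'. h v = i} \<longleftrightarrow> v \<in> {v\<in>T'. h1 v = i}"
          proof (cases "v = r")
            case True then show ?thesis using False rT by (simp add: h_def)
          next
            case False then show ?thesis by (simp add: h_def)
          qed
        qed
        then show ?thesis using acy by simp
      qed
    qed
    have "r#Q1 \<in> P" by (simp add: P_def)
    moreover have "\<forall>v\<in>insert r T'. h v < length (r#Q1)"
    proof
      fix v assume "v \<in> insert r T'"
      then show "h v < length (r#Q1)"
      proof (cases "v = r")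
        case False
        then have "v \<in> T'" using \<open>v \<in> insert r T'\<close> by blast
        then have "h1 v < length Q1" using Q1(3) by blast
        then show ?thesis using False by (simp add: h_def)
      qed (simp add: h_def)
    qed
    ultimately show "insert r T' \<noteq> {} \<longrightarrow> (\<exists>Q\<in>P. hd Q \<in> {r} \<and> (\<forall>v\<in>insert r T'. h v < length Q))"
      by force
  qed
  then show ?thesis by blast
qed

lemma stepB:
  assumes gT: "hgood V A T {r} PT hT" and gR: "hgood V A R S2 PR hR"
    and TR: "T \<inter> R = {}" and noarc: "\<forall>x\<in>T. \<forall>y\<in>R. (x,y) \<notin> A"
    and rS: "r \<in> S" and S2: "S2 \<subseteq> S" and rT: "r \<in> T"
  shows "\<exists>P h. hgood V A (T \<union> R) S P h"
proof -
  note gT' = gT[unfolded hgood_def]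
  have finT: "finite PT" using gT' by (elim conjE)
  have pathsT: "\<forall>Q\<in>PT. is_path V A Q" using gT' by (elim conjE)
  have disjT: "\<forall>Q\<in>PT. \<forall>Q'\<in>PT. Q \<noteq> Q' \<longrightarrow> set Q \<inter> set Q' = {}" using gT' by (elim conjE)
  have unT: "(\<Union>Q\<in>PT. set Q) = T" using gT' by (elim conjE)
  have htsT: "\<forall>Q\<in>PT. \<forall>j<length Q. hT (Q!j) = length Q - Suc j" using gT' by (elim conjE)
  have acyT: "\<forall>i. acyclic (A \<inter> ({v\<in>T. hT v = i} \<times> {v\<in>T. hT v = i}))" using gT' by (elim conjE)
  have mxT: "T \<noteq> {} \<longrightarrow> (\<exists>Q\<in>PT. hd Q \<in> {r} \<and> (\<forall>v\<in>T. hT v < length Q))" using gT' by (elim conjE)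
  note gR' = gR[unfolded hgood_def]
  have finR: "finite PR" using gR' by (elim conjE)
  have pathsR: "\<forall>Q\<in>PR. is_path V A Q" using gR' by (elim conjE)
  have disjR: "\<forall>Q\<in>PR. \<forall>Q'\<in>PR. Q \<noteq> Q' \<longrightarrow> set Q \<inter> set Q' = {}" using gR' by (elim conjE)
  have unR: "(\<Union>Q\<in>PR. set Q) = R" using gR' by (elim conjE)
  have htsR: "\<forall>Q\<in>PR. \<forall>j<length Q. hR (Q!j) = length Q - Suc j" using gR' by (elim conjE)
  have acyR: "\<forall>i. acyclic (A \<inter> ({v\<in>R. hR v = i} \<times> {v\<in>R. hR v = i}))" using gR' by (elim conjE)
  have mxR: "R \<noteq> {} \<longrightarrow> (\<exists>Q\<in>PR. hd Q \<in> S2 \<and> (\<forall>v\<in>R. hR v < length Q))" using gR' by (elim conjE)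
  define P where "P = PT \<union> PR"
  define h where "h = (\<lambda>v. if v \<in> T then hT v else hR v)"
  have sT: "set Q \<subseteq> T" if "Q \<in> PT" for Q using that unT by blast
  have sR: "set Q \<subseteq> R" if "Q \<in> PR" for Q using that unR by blast
  have "hgood V A (T \<union> R) S P h"
    unfolding hgood_def
  proof (intro conjI)
    show "finite P" using finT finR P_def by simp
    show "\<forall>Q\<in>P. is_path V A Q" using pathsT pathsR P_def by blast
    show "\<forall>Q\<in>P. \<forall>Q'\<in>P. Q \<noteq> Q' \<longrightarrow> set Q \<inter> set Q' = {}"
    proof (intro ballI impI)
      fix Q Q' assume a: "Q \<in> P" "Q' \<in> P" "Q \<noteq> Q'"
      have c1: "set X \<inter> set Y = {}" if "X \<in> PT" "Y \<in> PR" for X Y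
        using sT[OF that(1)] sR[OF that(2)] TR by blast
      show "set Q \<inter> set Q' = {}"
      proof (cases "Q \<in> PT")
        case True
        show ?thesis
        proof (cases "Q' \<in> PT")
          case True then show ?thesis using \<open>Q \<in> PT\<close> disjT a(3) by blast
        next
          case False then have "Q' \<in> PR" using a(2) P_def by blast
          then show ?thesis using c1 \<open>Q \<in> PT\<close> by blast
        qed
      next
        case False then have q: "Q \<in> PR" using a(1) P_def by blast
        show ?thesis
        proof (cases "Q' \<in> PT")
          case True then show ?thesis using c1[OF True q] by blast
        next
          case False then have "Q' \<in> PR" using a(2) P_def by blast
          then show ?thesis using q disjR a(3) by blast
        qed
      qed
    qed
    show "(\<Union>Q\<in>P. set Q) = T \<union> R" using unT unR P_def by blast
    show "\<forall>Q\<in>P. \<forall>j<length Q. h (Q!j) = length Q - Suc j"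
    proof (intro ballI allI impI)
      fix Q j assume a: "Q \<in> P" "j < length Q"
      then have m: "Q!j \<in> set Q" by simp
      show "h (Q!j) = length Q - Suc j"
      proof (cases "Q \<in> PT")
        case True
        then have "Q!j \<in> T" using sT m by blast
        then show ?thesis using htsT True a(2) h_def by simp
      next
        case False
        then have q: "Q \<in> PR" using a(1) P_def by blast
        then have "Q!j \<notin> T" using sR m TR by blast
        then show ?thesis using htsR q a(2) h_def by simp
      qed
    qed
    show "\<forall>i. acyclic (A \<inter> ({v\<in>T \<union> R. h v = i} \<times> {v\<in>T \<union> R. h v = i}))"
    proof
      fix i
      have e: "{v\<in>T \<union> R. h v = i} = {v\<in>T. hT v = i} \<union> {v\<in>R. hR v = i}"
        using TR h_def by auto
      have "\<forall>x\<in>{v\<in>T. hT v = i}. \<forall>y\<in>{v\<in>R. hR v = i}. (x,y) \<notin> A" using noarc by blast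
      then show "acyclic (A \<inter> ({v\<in>T \<union> R. h v = i} \<times> {v\<in>T \<union> R. h v = i}))"
        unfolding e using acyclic_union_oneway acyT acyR by blast
    qed
    obtain QT where QT: "QT \<in> PT" "hd QT = r" "\<forall>v\<in>T. hT v < length QT" using mxT rT by blast
    show "T \<union> R \<noteq> {} \<longrightarrow> (\<exists>Q\<in>P. hd Q \<in> S \<and> (\<forall>v\<in>T \<union> R. h v < length Q))"
    proof (cases "R \<noteq> {} \<and> (\<exists>Q\<in>PR. hd Q \<in> S2 \<and> (\<forall>v\<in>R. hR v < length Q) \<and> length QT < length Q)")
      case True
      then obtain QR where QR: "QR \<in> PR" "hd QR \<in> S2" "\<forall>v\<in>R. hR v < length QR" "length QT < length QR"
        by blast
      have "\<forall>v\<in>T \<union> R. h v < length QR"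
      proof
        fix v assume "v \<in> T \<union> R"
        then show "h v < length QR"
        proof (cases "v \<in> T")
          case True then show ?thesis using QT(3) QR(4) h_def by fastforce
        next
          case False then show ?thesis using QR(3) h_def \<open>v \<in> T \<union> R\<close> by auto
        qed
      qed
      then show ?thesis using QR(1,2) S2 P_def by blast
    next
      case False
      have "\<forall>v\<in>T \<union> R. h v < length QT"
      proof
        fix v assume "v \<in> T \<union> R"
        then show "h v < length QT"
        proof (cases "v \<in> T")
          case True then show ?thesis using QT(3) h_def by auto
        next
          case vT: False
          then have "v \<in> R" using \<open>v \<in> T \<union> R\<close> by blast
          then obtain QR where QR: "QR \<in> PR" "hd QR \<in> S2" "\<forall>v\<in>R. hR v < length QR"
            using mxR by blast
          then have "length QR \<le> length QT" using False \<open>v \<in> R\<close> by force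
          then show ?thesis using QR(3) \<open>v \<in> R\<close> vT h_def by fastforce
        qed
      qed
      then show ?thesis using QT(1,2) rS P_def by blast
    qed
  qed
  then show ?thesis by blast
qed

lemma struct_exists:
  assumes "digraph V A" "finite W" "W \<subseteq> V" "S \<subseteq> W" "\<forall>v\<in>W. \<exists>s\<in>S. (s,v) \<in> (A \<inter> W \<times> W)\<^sup>*"
  shows "\<exists>P h. hgood V A W S P h"
  using assms(2-)
proof (induction "card W" arbitrary: W S rule: less_induct)
  case less
  show ?case
  proof (cases "W = {}")
    case True
    have "hgood V A W S {} (\<lambda>_. 0)" unfolding hgood_def using True by (simp add: acyclic_def)
    then show ?thesis by blast
  next
    case False
    then obtain w where "w \<in> W" by blast
    then obtain r where rS: "r \<in> S" using less.prems(4) by blast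
    have rW: "r \<in> W" using rS less.prems(3) by blast
    define E where "E = A \<inter> W \<times> W"
    define T where "T = {v\<in>W. (r,v) \<in> E\<^sup>*}"
    define T' where "T' = T - {r}"
    define R where "R = W - T"
    have rT: "r \<in> T" using rW T_def by simp
    have TW: "T \<subseteq> W" using T_def by blast
    have closed: "v \<in> T" if "u \<in> T" "(u,v) \<in> A" "v \<in> W" for u v
    proof -
      have "(u,v) \<in> E" using that TW E_def by blast
      moreover have "(r,u) \<in> E\<^sup>*" using that(1) T_def by simp
      ultimately have "(r,v) \<in> E\<^sup>*" by (simp add: rtrancl.rtrancl_into_rtrancl)
      then show ?thesis using that(3) T_def by simp
    qed
    have noloop: "(r,r) \<notin> A" using assms(1) unfolding digraph_def by blast
    have rV: "r \<in> V" using rW less.prems(2) by blast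
    have "T' \<subset> W" using TW rW T'_def by blast
    then have cT': "card T' < card W" by (rule psubset_card_mono[OF less.prems(1)])
    have "R \<subset> W" using R_def rT rW by blast
    then have cR: "card R < card W" by (rule psubset_card_mono[OF less.prems(1)])
    define S1 where "S1 = {v\<in>T'. (r,v) \<in> A}"
    have reach1: "\<forall>v\<in>T'. \<exists>s\<in>S1. (s,v) \<in> (A \<inter> T' \<times> T')\<^sup>*"
    proof -
      have "v = r \<or> (\<exists>s\<in>S1. (s,v) \<in> (A \<inter> T' \<times> T')\<^sup>*)" if "(r,v) \<in> E\<^sup>*" for v
        using that
      proof (induction rule: rtrancl_induct)
        case base then show ?case by simp
      next
        case (step u v)
        have "u \<in> W" using step(1) rW E_def by (cases rule: rtranclE) auto
        then have uT: "u \<in> T" using step(1) T_def by blast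
        have vW: "v \<in> W" and uv: "(u,v) \<in> A" using step(2) E_def by auto
        have vT: "v \<in> T" using closed[OF uT uv vW] .
        show ?case
        proof (cases "v = r")
          case True then show ?thesis by simp
        next
          case vr: False
          show ?thesis
          proof (cases "u = r")
            case True
            then have "v \<in> S1" using vT vr uv S1_def T'_def by blast
            then show ?thesis by blast
          next
            case False
            then obtain s where s: "s \<in> S1" "(s,u) \<in> (A \<inter> T' \<times> T')\<^sup>*" using step(3) by blast
            have "(u,v) \<in> A \<inter> T' \<times> T'" using uT vT False vr uv T'_def by blast
            then show ?thesis using s by (meson rtrancl.rtrancl_into_rtrancl)
          qed
        qed
      qed
      then show ?thesis using T_def T'_def by blast
    qed
    have reach2: "\<forall>v\<in>R. \<exists>s\<in>S - T. (s,v) \<in> (A \<inter> R \<times> R)\<^sup>*"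
    proof
      fix v assume vR: "v \<in> R"
      then obtain s where s: "s \<in> S" "(s,v) \<in> E\<^sup>*" using less.prems(4) R_def E_def by blast
      have "s \<notin> T \<and> (s,v) \<in> (A \<inter> R \<times> R)\<^sup>*" if "(s,v) \<in> E\<^sup>*" "v \<in> R" for s
        using that
      proof (induction rule: converse_rtrancl_induct)
        case base then show ?case using R_def by blast
      next
        case (step y z)
        have zT: "z \<notin> T" and zv: "(z,v) \<in> (A \<inter> R \<times> R)\<^sup>*" using step by blast+
        have yz: "(y,z) \<in> A" "y \<in> W" "z \<in> W" using step(1) E_def by auto
        have yT: "y \<notin> T" using closed yz zT by blast
        have "(y,z) \<in> A \<inter> R \<times> R" using yz yT zT R_def by blast
        then show ?case using yT zv by (meson converse_rtrancl_into_rtrancl)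
      qed
      then show "\<exists>s\<in>S - T. (s,v) \<in> (A \<inter> R \<times> R)\<^sup>*" using s vR by blast
    qed
    have f1: "finite T'" using \<open>T' \<subset> W\<close> less.prems(1) finite_subset by blast
    have v1: "T' \<subseteq> V" using \<open>T' \<subset> W\<close> less.prems(2) by blast
    have s1: "S1 \<subseteq> T'" using S1_def by blast
    obtain P1 h1 where g1: "hgood V A T' S1 P1 h1"
      using less.hyps[OF cT' f1 v1 s1 reach1] by blast
    have f2: "finite R" using \<open>R \<subset> W\<close> less.prems(1) finite_subset by blast
    have v2: "R \<subseteq> V" using \<open>R \<subset> W\<close> less.prems(2) by blast
    have s2: "S - T \<subseteq> R" using R_def less.prems(3) by blast
    obtain P2 h2 where g2: "hgood V A R (S - T) P2 h2"
      using less.hyps[OF cR f2 v2 s2 reach2] by blast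
    have iT: "insert r T' = T" using rT T'_def by blast
    obtain PT hT where gT: "hgood V A T {r} PT hT"
    proof -
      have "r \<notin> T'" using T'_def by blast
      from stepA[OF g1 S1_def rV this noloop] show ?thesis using iT that by metis
    qed
    have "T \<union> R = W" using TW R_def by blast
    moreover have "\<exists>P h. hgood V A (T \<union> R) S P h"
      apply (rule stepB[OF gT g2 _ _ rS _ rT])
      using R_def closed by blast+
    ultimately show ?thesis by simp
  qed
qed

lemma hgood_fields:
  assumes "hgood V A W S P h"
  shows "finite P" "\<forall>Q\<in>P. is_path V A Q"
    "\<forall>Q\<in>P. \<forall>Q'\<in>P. Q \<noteq> Q' \<longrightarrow> set Q \<inter> set Q' = {}" "(\<Union>Q\<in>P. set Q) = W"
    "\<forall>Q\<in>P. \<forall>j<length Q. h (Q!j) = length Q - Suc j"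
    "\<forall>i. acyclic (A \<inter> ({v\<in>W. h v = i} \<times> {v\<in>W. h v = i}))"
  using assms by (simp_all add: hgood_def)

lemma card_top_indices:
  "card {j. j < n \<and> n - Suc j < (k::nat)} = min n k"
proof -
  have "{j. j < n \<and> n - Suc j < k} = {n - min n k..<n}" by auto
  then show ?thesis by simp
qed

lemma path_part_count:
  assumes dQ: "distinct Q" and hQ: "\<forall>j<length Q. h (Q!j) = length Q - Suc j"
  shows "card (set Q \<inter> {v. h v < k}) = min (length Q) k"
proof -
  have "set Q \<inter> {v. h v < k} = (\<lambda>j. Q!j) ` {j. j < length Q \<and> length Q - Suc j < k}"
  proof (rule set_eqI)
    fix v
    show "v \<in> set Q \<inter> {v. h v < k} \<longleftrightarrow> v \<in> (\<lambda>j. Q!j) ` {j. j < length Q \<and> length Q - Suc j < k}"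
    proof
      assume "v \<in> set Q \<inter> {v. h v < k}"
      then obtain j where j: "j < length Q" "Q!j = v" "h v < k" by (auto simp: in_set_conv_nth)
      then show "v \<in> (\<lambda>j. Q!j) ` {j. j < length Q \<and> length Q - Suc j < k}" using hQ by force
    next
      assume "v \<in> (\<lambda>j. Q!j) ` {j. j < length Q \<and> length Q - Suc j < k}"
      then obtain j where j: "j < length Q" "length Q - Suc j < k" "v = Q!j" by blast
      then show "v \<in> set Q \<inter> {v. h v < k}" using hQ by simp
    qed
  qed
  moreover have "inj_on (\<lambda>j. Q!j) {j. j < length Q \<and> length Q - Suc j < k}"
    using dQ by (simp add: inj_on_def nth_eq_iff_index_eq)
  ultimately show ?thesis using card_top_indices by (simp add: card_image)
qed

lemma path_level_count:
  assumes dQ: "distinct Q" and hQ: "\<forall>j<length Q. h (Q!j) = length Q - Suc j"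
  shows "card (set Q \<inter> {v. h v = i}) = (if i < length Q then 1 else 0)"
proof -
  have "set Q \<inter> {v. h v = i} = (if i < length Q then {Q ! (length Q - Suc i)} else {})"
  proof (rule set_eqI)
    fix v
    show "v \<in> set Q \<inter> {v. h v = i} \<longleftrightarrow> v \<in> (if i < length Q then {Q ! (length Q - Suc i)} else {})"
    proof
      assume "v \<in> set Q \<inter> {v. h v = i}"
      then obtain j where j: "j < length Q" "Q!j = v" "h v = i" by (auto simp: in_set_conv_nth)
      then have "i = length Q - Suc j" using hQ by auto
      then have "i < length Q" "j = length Q - Suc i" using j(1) by auto
      then show "v \<in> (if i < length Q then {Q ! (length Q - Suc i)} else {})" using j by simp
    next
      assume a: "v \<in> (if i < length Q then {Q ! (length Q - Suc i)} else {})"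
      then have i: "i < length Q" by (cases "i < length Q") auto
      then have v: "v = Q ! (length Q - Suc i)" using a by simp
      have "length Q - Suc i < length Q" using i by simp
      then have "h v = length Q - Suc (length Q - Suc i)" using hQ v by blast
      then have "h v = i" using i by simp
      then show "v \<in> set Q \<inter> {v. h v = i}" using v \<open>length Q - Suc i < length Q\<close> by simp
    qed
  qed
  then show ?thesis by simp
qed

lemma level_count:
  assumes fin: "finite K" and d: "\<forall>Q\<in>K. distinct Q"
    and disj: "\<forall>Q\<in>K. \<forall>Q'\<in>K. Q \<noteq> Q' \<longrightarrow> set Q \<inter> set Q' = {}"
    and hts: "\<forall>Q\<in>K. \<forall>j<length Q. h (Q!j) = length Q - Suc j"
  shows "card ((\<Union>Q\<in>K. set Q) \<inter> {v. h v = i}) = card {Q\<in>K. i < length Q}"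
proof -
  have "(\<Union>Q\<in>K. set Q) \<inter> {v. h v = i} = (\<Union>Q\<in>K. set Q \<inter> {v. h v = i})" by blast
  moreover have "card (\<Union>Q\<in>K. set Q \<inter> {v. h v = i}) = (\<Sum>Q\<in>K. card (set Q \<inter> {v. h v = i}))"
    using fin disj by (intro card_UN_disjoint) auto
  moreover have "(\<Sum>Q\<in>K. card (set Q \<inter> {v. h v = i})) = (\<Sum>Q\<in>K. if i < length Q then 1 else 0)"
  proof (rule sum.cong[OF refl])
    fix Q assume "Q \<in> K"
    then show "card (set Q \<inter> {v. h v = i}) = (if i < length Q then 1 else 0)"
      using path_level_count[of Q h i] d hts by blast
  qed
  moreover have "(\<Sum>Q\<in>K. if i < length Q then 1 else (0::nat)) = card {Q\<in>K. i < length Q}"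
    using fin by (simp add: sum.If_cases Int_def conj_commute)
  ultimately show ?thesis by simp
qed

lemma get_struct:
  assumes "digraph V A"
  shows "\<exists>P h. hgood V A V V P h"
proof -
  have "finite V" using assms unfolding digraph_def by blast
  moreover have "\<forall>v\<in>V. \<exists>s\<in>V. (s,v) \<in> (A \<inter> V \<times> V)\<^sup>*" by blast
  ultimately show ?thesis using struct_exists[OF assms] by blast
qed

lemma pi_part:
  assumes dg: "digraph V A"
  shows "pi_k k V A \<le> alpha'_k k V A"
proof -
  have finV: "finite V" using dg unfolding digraph_def by blast
  obtain P h where g: "hgood V A V V P h" using get_struct[OF dg] by blast
  note F = hgood_fields[OF g]
  have pp: "path_partition V A P" unfolding path_partition_def using F by blast
  define L where "L = {xs. set xs \<subseteq> V \<and> length xs \<le> card V}"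
  have finL: "finite L" unfolding L_def using finV by (rule finite_lists_length_le)
  have "P' \<subseteq> L" if "path_partition V A P'" for P'
  proof
    fix Q assume "Q \<in> P'"
    then have "is_path V A Q" using that unfolding path_partition_def by blast
    then have "distinct Q" "set Q \<subseteq> V" unfolding is_path_def by blast+
    then have "length Q \<le> card V" using finV by (metis card_mono distinct_card)
    then show "Q \<in> L" using \<open>set Q \<subseteq> V\<close> L_def by blast
  qed
  then have "{path_knorm k P' | P'. path_partition V A P'} \<subseteq> path_knorm k ` Pow L" by blast
  then have fin1: "finite {path_knorm k P' | P'. path_partition V A P'}"
    using finL by (meson finite_Pow_iff finite_imageI finite_subset)
  have "pi_k k V A \<le> path_knorm k P"
    unfolding pi_k_def using fin1 pp by (intro Min_le) blast+
  have dQ: "\<forall>Q\<in>P. distinct Q" using F(2) unfolding is_path_def by blast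
  have "{v\<in>V. h v < k} = (\<Union>Q\<in>P. set Q \<inter> {v. h v < k})" using F(4) by blast
  have "card {v\<in>V. h v < k} = (\<Sum>Q\<in>P. card (set Q \<inter> {v. h v < k}))"
  proof -
    have "card (\<Union>Q\<in>P. set Q \<inter> {v. h v < k}) = (\<Sum>Q\<in>P. card (set Q \<inter> {v. h v < k}))"
      using F(1) F(3) by (intro card_UN_disjoint) auto
    then show ?thesis using \<open>{v\<in>V. h v < k} = (\<Union>Q\<in>P. set Q \<inter> {v. h v < k})\<close> by simp
  qed
  also have "\<dots> = (\<Sum>Q\<in>P. min (length Q) k)"
  proof (rule sum.cong[OF refl])
    fix Q assume "Q \<in> P"
    then show "card (set Q \<inter> {v. h v < k}) = min (length Q) k"
      using path_part_count[of Q h k] dQ F(5) by blast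
  qed
  finally have eq: "path_knorm k P = card {v\<in>V. h v < k}" unfolding path_knorm_def by simp
  define Sc where "Sc = (\<lambda>i. {v\<in>V. h v = i})"
  have pd: "partial_dicoloring k V A Sc"
    unfolding partial_dicoloring_def acyclic_set_def Sc_def using F(6) by auto
  have un: "(\<Union>i<k. Sc i) = {v\<in>V. h v < k}" unfolding Sc_def by auto
  have "{card (\<Union>i<k. S i) | S. partial_dicoloring k V A S} \<subseteq> {..card V}"
  proof
    fix x assume "x \<in> {card (\<Union>i<k. S i) | S. partial_dicoloring k V A S}"
    then obtain S where S: "x = card (\<Union>i<k. S i)" "partial_dicoloring k V A S" by blast
    then have "(\<Union>i<k. S i) \<subseteq> V" unfolding partial_dicoloring_def acyclic_set_def by blast
    then show "x \<in> {..card V}" using S(1) finV by (simp add: card_mono)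
  qed
  then have fin2: "finite {card (\<Union>i<k. S i) | S. partial_dicoloring k V A S}"
    using finite_subset by blast
  have "card {v\<in>V. h v < k} \<le> alpha'_k k V A"
    unfolding alpha'_k_def using fin2 pd un by (intro Max_ge) (auto, metis)
  then show ?thesis using \<open>pi_k k V A \<le> path_knorm k P\<close> eq by simp
qed

lemma chi_part:
  assumes dg: "digraph V A"
  shows "chi'_k k V A \<le> lambda_k k V A"
proof -
  have finV: "finite V" using dg unfolding digraph_def by blast
  obtain P h where g: "hgood V A V V P h" using get_struct[OF dg] by blast
  note F = hgood_fields[OF g]
  have dQ: "\<forall>Q\<in>P. distinct Q" using F(2) unfolding is_path_def by blast
  have neQ: "\<forall>Q\<in>P. Q \<noteq> []" using F(2) unfolding is_path_def by blast
  define H where "H = (\<lambda>i. {v\<in>V. h v = i})"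
  define C where "C = H ` (h ` V)"
  have injH: "inj_on H (h ` V)"
  proof (rule inj_onI)
    fix i j assume "i \<in> h ` V" "j \<in> h ` V" "H i = H j"
    then obtain v where "v \<in> V" "h v = i" by blast
    then have "v \<in> H j" using \<open>H i = H j\<close> H_def by blast
    then show "i = j" using \<open>h v = i\<close> H_def by simp
  qed
  have dc: "dicoloring V A C"
    unfolding dicoloring_def
  proof (intro conjI)
    show "\<forall>S\<in>C. S \<noteq> {} \<and> acyclic_set V A S"
    proof
      fix S assume "S \<in> C"
      then obtain v where v: "v \<in> V" "S = H (h v)" unfolding C_def by blast
      then have "v \<in> S" unfolding H_def by simp
      moreover have "S \<subseteq> V" using v unfolding H_def by blast
      moreover have "acyclic (A \<inter> (S \<times> S))" using v F(6) unfolding H_def by simp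
      ultimately show "S \<noteq> {} \<and> acyclic_set V A S" unfolding acyclic_set_def by blast
    qed
    show "\<forall>S\<in>C. \<forall>T\<in>C. S \<noteq> T \<longrightarrow> S \<inter> T = {}"
    proof (intro ballI impI)
      fix S T assume "S \<in> C" "T \<in> C" "S \<noteq> T"
      then obtain i j where "S = H i" "T = H j" unfolding C_def by blast
      then have "i \<noteq> j" using \<open>S \<noteq> T\<close> by blast
      then show "S \<inter> T = {}" using \<open>S = H i\<close> \<open>T = H j\<close> unfolding H_def by blast
    qed
    show "\<Union>C = V" unfolding C_def H_def by blast
  qed
  have "{col_knorm k S | S. dicoloring V A S} \<subseteq> col_knorm k ` Pow (Pow V)"
  proof
    fix x assume "x \<in> {col_knorm k S | S. dicoloring V A S}"
    then obtain S where S: "x = col_knorm k S" "dicoloring V A S" by blast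
    then have "\<Union>S = V" unfolding dicoloring_def by blast
    then have "S \<in> Pow (Pow V)" by blast
    then show "x \<in> col_knorm k ` Pow (Pow V)" using S(1) by blast
  qed
  then have fin1: "finite {col_knorm k S | S. dicoloring V A S}"
    using finV by (meson finite_Pow_iff finite_imageI finite_subset)
  have c1: "chi'_k k V A \<le> col_knorm k C"
    unfolding chi'_k_def using fin1 dc by (intro Min_le) blast+
  have c2: "col_knorm k C = (\<Sum>i\<in>h ` V. min (card (H i)) k)"
    unfolding col_knorm_def C_def using injH by (simp add: sum.reindex)
  define f where "f = (\<lambda>K. \<Sum>Q\<in>K. length (Q::'a list))"
  have "\<exists>K. (K \<subseteq> P \<and> card K \<le> k) \<and> (\<forall>K'. K' \<subseteq> P \<and> card K' \<le> k \<longrightarrow> f K' \<le> f K)"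
  proof (rule ex_has_greatest_nat[where k = "{}" and b = "Suc (f P)"])
    show "{} \<subseteq> P \<and> card {} \<le> k" by simp
    show "\<forall>K. K \<subseteq> P \<and> card K \<le> k \<longrightarrow> f K < Suc (f P)"
    proof (intro allI impI)
      fix K assume "K \<subseteq> P \<and> card K \<le> k"
      then have "f K \<le> f P" unfolding f_def using F(1) by (intro sum_mono2) auto
      then show "f K < Suc (f P)" by simp
    qed
  qed
  then obtain K where KP: "K \<subseteq> P" and Kk: "card K \<le> k"
    and Kmax: "\<And>K'. K' \<subseteq> P \<Longrightarrow> card K' \<le> k \<Longrightarrow> f K' \<le> f K" by blast
  have finK: "finite K" using KP F(1) finite_subset by blast
  have full: "card K = k" if "Q0 \<in> P - K" for Q0
  proof (rule ccontr)
    assume "card K \<noteq> k"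
    then have "card (insert Q0 K) \<le> k" using Kk that finK by simp
    moreover have "insert Q0 K \<subseteq> P" using that KP by blast
    ultimately have "f (insert Q0 K) \<le> f K" using Kmax by blast
    moreover have "f (insert Q0 K) = length Q0 + f K" unfolding f_def using that finK by simp
    moreover have "length Q0 > 0" using neQ that by simp
    ultimately show False by simp
  qed
  have longer: "length Q0 \<le> length Q" if "Q0 \<in> P - K" "Q \<in> K" for Q0 Q
  proof (rule ccontr)
    assume "\<not> length Q0 \<le> length Q"
    define K' where "K' = insert Q0 (K - {Q})"
    have "Q0 \<notin> K - {Q}" using that by blast
    then have "card K' = Suc (card (K - {Q}))" unfolding K'_def using finK by simp
    moreover have "card (K - {Q}) = card K - 1" using that(2) finK by simp
    moreover have "card K > 0" using that(2) finK card_gt_0_iff by blast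
    ultimately have "card K' = card K" by simp
    then have "card K' \<le> k" using Kk by simp
    moreover have "K' \<subseteq> P" unfolding K'_def using that KP by blast
    ultimately have "f K' \<le> f K" using Kmax by blast
    moreover have "f K' = length Q0 + f (K - {Q})" unfolding f_def K'_def using that finK by simp
    moreover have "f K = length Q + f (K - {Q})" unfolding f_def
      using sum.remove[OF finK, of Q length] that(2) by blast
    ultimately show False using \<open>\<not> length Q0 \<le> length Q\<close> by simp
  qed
  define X where "X = (\<Union>Q\<in>K. set Q)"
  have XV: "X \<subseteq> V" unfolding X_def using F(4) KP by blast
  have cntP: "card (H i) = card {Q\<in>P. i < length Q}" for i
  proof -
    have "H i = (\<Union>Q\<in>P. set Q) \<inter> {v. h v = i}" unfolding H_def using F(4) by blast
    then show ?thesis using level_count[OF F(1) dQ F(3) F(5)] by simp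
  qed
  have cntK: "card (H i \<inter> X) = card {Q\<in>K. i < length Q}" for i
  proof -
    have "H i \<inter> X = (\<Union>Q\<in>K. set Q) \<inter> {v. h v = i}" unfolding H_def X_def using XV X_def by blast
    moreover have "card ((\<Union>Q\<in>K. set Q) \<inter> {v. h v = i}) = card {Q\<in>K. i < length Q}"
      using finK dQ F(3) F(5) KP by (intro level_count) blast+
    ultimately show ?thesis by simp
  qed
  have le: "min (card (H i)) k \<le> card (H i \<inter> X)" for i
  proof (cases "{Q\<in>P. i < length Q} \<subseteq> K")
    case True
    then have "{Q\<in>K. i < length Q} = {Q\<in>P. i < length Q}" using KP by blast
    then show ?thesis using cntP cntK by simp
  next
    case False
    then obtain Q0 where Q0: "Q0 \<in> P - K" "i < length Q0" by blast
    have "{Q\<in>K. i < length Q} = K"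
    proof
      show "K \<subseteq> {Q\<in>K. i < length Q}"
      proof
        fix Q assume "Q \<in> K"
        then have "length Q0 \<le> length Q" using longer Q0(1) by blast
        then show "Q \<in> {Q\<in>K. i < length Q}" using \<open>Q \<in> K\<close> Q0(2) by simp
      qed
    qed blast
    then have "card (H i \<inter> X) = k" using cntK full[OF Q0(1)] by simp
    then show ?thesis by simp
  qed
  have sumX: "card X = (\<Sum>i\<in>h ` V. card (H i \<inter> X))"
  proof -
    have "X = (\<Union>i\<in>h ` V. H i \<inter> X)" unfolding H_def using XV by blast
    moreover have "card (\<Union>i\<in>h ` V. H i \<inter> X) = (\<Sum>i\<in>h ` V. card (H i \<inter> X))"
      using finV by (intro card_UN_disjoint) (auto simp: H_def)
    ultimately show ?thesis by simp
  qed
  have c3: "(\<Sum>i\<in>h ` V. min (card (H i)) k) \<le> card X"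
    unfolding sumX by (intro sum_mono le)
  obtain ks where ks: "set ks = K" "distinct ks" using finite_distinct_list[OF finK] by blast
  have lks: "length ks \<le> k" using ks Kk by (metis distinct_card)
  define Pk where "Pk = (\<lambda>i. if i < length ks then ks ! i else [])"
  have kp: "k_pack k V A Pk"
    unfolding k_pack_def
  proof (intro conjI allI impI)
    fix i assume "i < k"
    show "Pk i = [] \<or> is_path V A (Pk i)"
    proof (cases "i < length ks")
      case True
      then have "ks ! i \<in> P" using ks KP nth_mem by blast
      then show ?thesis using F(2) True Pk_def by simp
    qed (simp add: Pk_def)
  next
    fix i j assume "i < k" "j < k" "i \<noteq> j"
    show "set (Pk i) \<inter> set (Pk j) = {}"
    proof (cases "i < length ks \<and> j < length ks")
      case True
      then have "ks ! i \<noteq> ks ! j" using ks(2) \<open>i \<noteq> j\<close> by (simp add: nth_eq_iff_index_eq)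
      moreover have "ks ! i \<in> P" "ks ! j \<in> P" using True ks KP nth_mem by blast+
      ultimately show ?thesis using F(3) True Pk_def by simp
    next
      case False
      then show ?thesis unfolding Pk_def by auto
    qed
  qed
  have unk: "(\<Union>i<k. set (Pk i)) = X"
  proof
    show "(\<Union>i<k. set (Pk i)) \<subseteq> X"
    proof
      fix v assume "v \<in> (\<Union>i<k. set (Pk i))"
      then obtain i where i: "i < k" "v \<in> set (Pk i)" by blast
      then have "i < length ks" unfolding Pk_def by (cases "i < length ks") auto
      then show "v \<in> X" using i ks X_def Pk_def nth_mem by fastforce
    qed
    show "X \<subseteq> (\<Union>i<k. set (Pk i))"
    proof
      fix v assume "v \<in> X"
      then obtain Q where "Q \<in> K" "v \<in> set Q" unfolding X_def by blast
      then obtain i where "i < length ks" "ks ! i = Q" using ks(1) by (metis in_set_conv_nth)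
      then show "v \<in> (\<Union>i<k. set (Pk i))" using lks \<open>v \<in> set Q\<close> Pk_def by force
    qed
  qed
  have "{card (\<Union>i<k. set (P' i)) | P'. k_pack k V A P'} \<subseteq> {..card V}"
  proof
    fix x assume "x \<in> {card (\<Union>i<k. set (P' i)) | P'. k_pack k V A P'}"
    then obtain P' where P': "x = card (\<Union>i<k. set (P' i))" "k_pack k V A P'" by blast
    have "(\<Union>i<k. set (P' i)) \<subseteq> V"
    proof
      fix v assume "v \<in> (\<Union>i<k. set (P' i))"
      then obtain i where i: "i < k" "v \<in> set (P' i)" by blast
      then have "P' i \<noteq> []" by auto
      then have "is_path V A (P' i)" using P'(2) i(1) unfolding k_pack_def by blast
      then show "v \<in> V" using i(2) unfolding is_path_def by blast
    qed
    then show "x \<in> {..card V}" using P'(1) finV by (simp add: card_mono)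
  qed
  then have fin2: "finite {card (\<Union>i<k. set (P' i)) | P'. k_pack k V A P'}"
    using finite_subset by blast
  have "card X \<in> {card (\<Union>i<k. set (P' i)) | P'. k_pack k V A P'}"
    using kp unk by (metis (mono_tags, lifting) mem_Collect_eq)
  then have "card X \<le> lambda_k k V A"
    unfolding lambda_k_def using Max_ge[OF fin2] by blast
  then show ?thesis using c1 c2 c3 by simp
qed

theorem mainTheorem1:
  fixes V :: "'a set" and A :: "'a rel" and k :: nat
  assumes "digraph V A" and "k \<ge> 1"
  shows "pi_k k V A \<le> alpha'_k k V A \<and> chi'_k k V A \<le> lambda_k k V A"
  using pi_part[OF assms(1)] chi_part[OF assms(1)] by blast

end
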